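(* Let $\Gamma$ be a connected $\mathbb Z$-leg-weighted graph with edge set $E$, and let $w_1,w_2\in W(\Gamma)$ be two weightings. Then $c_{w_1}\cap c_{w_2}$ is a face of $c_{w_1}$.
   Context: A graph consists of a finite set $V$ of vertices, a finite set $H$ of half-edges, a map $\mathrm{end}\colon H\to V$, an involution $i$ of $H$, a genus function $g\colon V\to\mathbb Z_{\ge0}$ and an integer twist $k$. Legs are fixed points of $i$; edges are pairs $\{h,i(h)\}$ with $h\ne i(h)$; a directed edge is a non-leg half-edge $h$, with source $\mathrm{end}(h)$ and target $\mathrm{end}(i(h))$. The valence of $v$ is the number of non-leg half-edges at $v$, and $\kappa(v)=2g(v)-2+\mathrm{val}(v)$; $g(\Gamma)$ is the first Betti number plus $\sum_v g(v)$. A cycle is a closed walk of directed edges (target of each is the source of the next) repeating no vertex or undirected edge. A weighting is a function $w\colon H\to\mathbb Z$ with $w(h)+w(i(h))=0$ whenever $h\neq i(h)$, and $\sum_{\mathrm{end}(h)=v}w(h)+k\kappa(v)=0$ for every vertex $v$. A leg-weighted graph is a graph with a function from legs to $\mathbb Z$ summing to $-k(2g(\Gamma)-2)$; $W(\Gamma)$ is the set of weightings restricting to the given leg values. For a directed edge $e$ in a cycle $\gamma$, $w_\gamma(e)$ is the value of $w$ on the half-edge of $e$ at its source (in the direction of $\gamma$). A thickness $t\in\mathbb Q_{\ge0}^E$ is compatible with $w$ if $\sum_{e\in\gamma}w_\gamma(e)t(e)=0$ for every cycle $\gamma$; $c_w\subseteq\mathbb Q_{\ge0}^E$ is the rational polyhedral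 cone of thicknesses compatible with $w$. *)

theory Defs
  imports Complex_Main
begin

record ('v, 'h) graph =
  verts :: "'v set"
  halfs :: "'h set"
  endp  :: "'h \<Rightarrow> 'v"
  invol :: "'h \<Rightarrow> 'h"
  gen   :: "'v \<Rightarrow> nat"
  twist :: int

definition is_graph :: "('v, 'h) graph \<Rightarrow> bool" where
  "is_graph G \<longleftrightarrow> finite (verts G) \<and> finite (halfs G)
     \<and> (\<forall>h\<in>halfs G. endp G h \<in> verts G)
     \<and> (\<forall>h\<in>halfs G. invol G h \<in> halfs G \<and> invol G (invol G h) = h)"

definition legs :: "('v, 'h) graph \<Rightarrow> 'h set" where
  "legs G = {h \<in> halfs G. invol G h = h}"

definition dedges :: "('v, 'h) graph \<Rightarrow> 'h set" where
  "dedges G = {h \<in> halfs G. invol G h \<noteq> h}"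

definition edge_of :: "('v, 'h) graph \<Rightarrow> 'h \<Rightarrow> 'h set" where
  "edge_of G h = {h, invol G h}"

definition edges :: "('v, 'h) graph \<Rightarrow> 'h set set" where
  "edges G = edge_of G ` dedges G"

definition src :: "('v, 'h) graph \<Rightarrow> 'h \<Rightarrow> 'v" where
  "src G h = endp G h"

definition tgt :: "('v, 'h) graph \<Rightarrow> 'h \<Rightarrow> 'v" where
  "tgt G h = endp G (invol G h)"

definition valence :: "('v, 'h) graph \<Rightarrow> 'v \<Rightarrow> nat" where
  "valence G v = card {h \<in> dedges G. endp G h = v}"

definition kappa :: "('v, 'h) graph \<Rightarrow> 'v \<Rightarrow> int" where
  "kappa G v = 2 * int (gen G v) - 2 + int (valence G v)"

definition adj :: "('v, 'h) graph \<Rightarrow> ('v \<times> 'v) set" where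
  "adj G = {(src G h, tgt G h) | h. h \<in> dedges G}"

definition connected_graph :: "('v, 'h) graph \<Rightarrow> bool" where
  "connected_graph G \<longleftrightarrow> verts G \<noteq> {} \<and>
     (\<forall>u\<in>verts G. \<forall>v\<in>verts G. (u, v) \<in> (adj G)\<^sup>*)"

definition num_components :: "('v, 'h) graph \<Rightarrow> nat" where
  "num_components G = card (verts G // ((adj G)\<^sup>* \<inter> (verts G \<times> verts G)))"

definition betti1 :: "('v, 'h) graph \<Rightarrow> int" where
  "betti1 G = int (card (edges G)) - int (card (verts G)) + int (num_components G)"

definition graph_genus :: "('v, 'h) graph \<Rightarrow> int" where
  "graph_genus G = betti1 G + (\<Sum>v\<in>verts G. int (gen G v))"

definition is_weighting :: "('v, 'h) graph \<Rightarrow> ('h \<Rightarrow> int) \<Rightarrow> bool" where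
  "is_weighting G w \<longleftrightarrow>
     (\<forall>h\<in>dedges G. w h + w (invol G h) = 0)
     \<and> (\<forall>v\<in>verts G. (\<Sum>h\<in>{h \<in> halfs G. endp G h = v}. w h) + twist G * kappa G v = 0)"

definition is_leg_weighting :: "('v, 'h) graph \<Rightarrow> ('h \<Rightarrow> int) \<Rightarrow> bool" where
  "is_leg_weighting G m \<longleftrightarrow>
     (\<Sum>h\<in>legs G. m h) = - twist G * (2 * graph_genus G - 2)"

definition weightings :: "('v, 'h) graph \<Rightarrow> ('h \<Rightarrow> int) \<Rightarrow> ('h \<Rightarrow> int) set" where
  "weightings G m = {w. is_weighting G w \<and> (\<forall>h\<in>legs G. w h = m h)}"

definition is_cycle :: "('v, 'h) graph \<Rightarrow> 'h list \<Rightarrow> bool" where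
  "is_cycle G c \<longleftrightarrow> c \<noteq> [] \<and> set c \<subseteq> dedges G
     \<and> (\<forall>j < length c. tgt G (c ! j) = src G (c ! ((j + 1) mod length c)))
     \<and> distinct (map (src G) c)
     \<and> distinct (map (edge_of G) c)"

text \<open>Thicknesses are elements of Q_{>=0}^E, represented as functions on
  undirected edges that vanish outside E.\<close>
definition thicknesses :: "('v, 'h) graph \<Rightarrow> ('h set \<Rightarrow> rat) set" where
  "thicknesses G = {t. (\<forall>e\<in>edges G. t e \<ge> 0) \<and> (\<forall>e. e \<notin> edges G \<longrightarrow> t e = 0)}"

definition compatible :: "('v, 'h) graph \<Rightarrow> ('h \<Rightarrow> int) \<Rightarrow> ('h set \<Rightarrow> rat) \<Rightarrow> bool" where
  "compatible G w t \<longleftrightarrow>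
     (\<forall>c. is_cycle G c \<longrightarrow> (\<Sum>h\<leftarrow>c. of_int (w h) * t (edge_of G h)) = 0)"

definition cone_w :: "('v, 'h) graph \<Rightarrow> ('h \<Rightarrow> int) \<Rightarrow> ('h set \<Rightarrow> rat) set" where
  "cone_w G w = {t \<in> thicknesses G. compatible G w t}"

definition convex_rat :: "('e \<Rightarrow> rat) set \<Rightarrow> bool" where
  "convex_rat S \<longleftrightarrow> (\<forall>x\<in>S. \<forall>y\<in>S. \<forall>u::rat. 0 \<le> u \<and> u \<le> 1 \<longrightarrow>
       (\<lambda>e. (1 - u) * x e + u * y e) \<in> S)"

definition open_segment_rat :: "('e \<Rightarrow> rat) \<Rightarrow> ('e \<Rightarrow> rat) \<Rightarrow> ('e \<Rightarrow> rat) set" where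
  "open_segment_rat a b =
     (if a = b then {} else {(\<lambda>e. (1 - u) * a e + u * b e) | u::rat. 0 < u \<and> u < 1})"

definition face_of_rat :: "('e \<Rightarrow> rat) set \<Rightarrow> ('e \<Rightarrow> rat) set \<Rightarrow> bool" (infixr "face'_of'_rat" 50) where
  "T face_of_rat S \<longleftrightarrow> T \<subseteq> S \<and> convex_rat T \<and>
     (\<forall>a\<in>S. \<forall>b\<in>S. \<forall>x\<in>T. x \<in> open_segment_rat a b \<longrightarrow> a \<in> T \<and> b \<in> T)"

end

theory Submission
  imports Defs
begin

inductive walk :: "('v, 'h) graph \<Rightarrow> 'v \<Rightarrow> 'h list \<Rightarrow> 'v \<Rightarrow> bool" for G where
  wnil: "walk G u [] u"
| wcons: "h \<in> dedges G \<Longrightarrow> src G h = u \<Longrightarrow> walk G (tgt G h) hs v \<Longrightarrow> walk G u (h # hs) v"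

lemma walk_append: "walk G u (xs @ ys) v \<longleftrightarrow> (\<exists>m. walk G u xs m \<and> walk G m ys v)"
proof (induction xs arbitrary: u)
  case Nil
  then show ?case by (auto intro: wnil elim: walk.cases)
next
  case (Cons x xs)
  show ?case
  proof
    assume "walk G u ((x # xs) @ ys) v"
    then have "x \<in> dedges G" "src G x = u" "walk G (tgt G x) (xs @ ys) v"
      by (auto elim: walk.cases)
    then show "\<exists>m. walk G u (x # xs) m \<and> walk G m ys v"
      using Cons.IH by (auto intro: wcons)
  next
    assume "\<exists>m. walk G u (x # xs) m \<and> walk G m ys v"
    then obtain m where "walk G u (x # xs) m" "walk G m ys v" by blast
    then have "x \<in> dedges G" "src G x = u" "walk G (tgt G x) xs m"
      by (auto elim: walk.cases)
    then show "walk G u ((x # xs) @ ys) v"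
      using Cons.IH \<open>walk G m ys v\<close> by (auto intro: wcons)
  qed
qed

lemma walk_Cons_src: "walk G a (h # hs) v \<Longrightarrow> src G h = a"
  by (auto elim: walk.cases)

lemma walk_set: "walk G u c v \<Longrightarrow> set c \<subseteq> dedges G"
  by (induction rule: walk.induct) auto

lemma walk_nth: "walk G u c v \<Longrightarrow> j < length c \<Longrightarrow>
    tgt G (c ! j) = (if j + 1 < length c then src G (c ! (j + 1)) else v)"
proof (induction arbitrary: j rule: walk.induct)
  case (wnil u)
  then show ?case by simp
next
  case (wcons h u hs v)
  show ?case
  proof (cases j)
    case 0
    then show ?thesis using wcons by (cases hs) (auto elim: walk.cases)
  next
    case (Suc k)
    then show ?thesis using wcons by auto
  qed
qed

lemma walk_rev:
  assumes g: "is_graph G"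
  shows "walk G u c v \<Longrightarrow> walk G v (rev (map (invol G) c)) u"
proof (induction rule: walk.induct)
  case (wnil u)
  then show ?case by (simp add: walk.wnil)
next
  case (wcons h u hs v)
  have hh: "h \<in> halfs G" "invol G h \<noteq> h" using wcons(1) by (auto simp: dedges_def)
  have ih: "invol G h \<in> dedges G" "invol G (invol G h) = h"
    using g hh by (auto simp: is_graph_def dedges_def)
  have "walk G (tgt G h) [invol G h] u"
    using ih wcons(2) by (intro walk.wcons) (auto simp: src_def tgt_def intro: walk.wnil)
  then show ?case using wcons(4) walk_append by fastforce
qed

lemma closed_walk_zero:
  fixes f :: "'h \<Rightarrow> rat"
  assumes g: "is_graph G"
    and anti: "\<And>h. h \<in> dedges G \<Longrightarrow> f (invol G h) = - f h"
    and cyc: "\<And>c. is_cycle G c \<Longrightarrow> sum_list (map f c) = 0"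
  shows "walk G u c u \<Longrightarrow> sum_list (map f c) = 0"
proof (induction "length c" arbitrary: c u rule: less_induct)
  case less
  note w = less.prems
  show ?case
  proof (cases "distinct (map (src G) c)")
    case False
    then obtain i0 j0 where ij0: "i0 < length c" "j0 < length c" "i0 \<noteq> j0" "src G (c ! i0) = src G (c ! j0)"
      unfolding distinct_conv_nth by auto
    then obtain i j where ij: "i < j" "j < length c" "src G (c ! i) = src G (c ! j)"
      by (metis linorder_neq_iff)
    define c1 where "c1 = take i c"
    define c2 where "c2 = take (j - i) (drop i c)"
    define c3 where "c3 = drop j c"
    have dd: "drop (j - i) (drop i c) = drop j c" using ij(1) by simp
    have dr: "drop i c = c2 @ c3"
      unfolding c2_def c3_def dd[symmetric] by (rule append_take_drop_id[symmetric])
    have dec: "c = c1 @ c2 @ c3"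
      unfolding c1_def dr[symmetric] by simp
    from w dec obtain a b where wa: "walk G u c1 a" "walk G a c2 b" "walk G b c3 u"
      using walk_append by metis
    have "walk G a (drop i c) u"
      unfolding dr using wa(2,3) walk_append[of G a c2 c3 u] by blast
    moreover have "drop i c = c ! i # drop (Suc i) c" using ij by (simp add: Cons_nth_drop_Suc)
    ultimately have a: "a = src G (c ! i)" by (auto dest: walk_Cons_src)
    have "drop j c = c ! j # drop (Suc j) c" using ij by (simp add: Cons_nth_drop_Suc)
    then have b: "b = src G (c ! j)"
      using wa(3) unfolding c3_def by (auto dest: walk_Cons_src)
    have l2: "length c2 < length c" "length c3 + length c1 < length c"
      using ij by (simp_all add: c1_def c2_def c3_def)
    have s2: "sum_list (map f c2) = 0"
      using less.hyps[OF l2(1)] wa(2) a b ij by auto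
    have "walk G a (c3 @ c1) a" using wa a b ij(3) walk_append[of G a c3 c1 a] by auto
    then have s31: "sum_list (map f (c3 @ c1)) = 0"
      using less.hyps[of "c3 @ c1" a] l2(2) by simp
    show ?thesis using s2 s31 dec by simp
  next
    case dsrc: True
    show ?thesis
    proof (cases "c = []")
      case True then show ?thesis by simp
    next
      case ne: False
      have setc: "set c \<subseteq> dedges G" using walk_set[OF w] by simp
      have u0: "src G (c ! 0) = u" using w ne by (cases c) (auto elim: walk.cases)
      show ?thesis
      proof (cases "distinct (map (edge_of G) c)")
        case True
        have "is_cycle G c"
          unfolding is_cycle_def
        proof (intro conjI allI impI)
          fix j assume j: "j < length c"
          show "tgt G (c ! j) = src G (c ! ((j + 1) mod length c))"
          proof (cases "j + 1 < length c")
            case True then show ?thesis using walk_nth[OF w j] by simp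
          next
            case False
            then have "j + 1 = length c" using j by simp
            then have "(j + 1) mod length c = 0" by simp
            then show ?thesis using walk_nth[OF w j] False u0 by simp
          qed
        qed (use ne setc dsrc True in auto)
        then show ?thesis using cyc by blast
      next
        case False
        then obtain i0 j0 where ij0: "i0 < length c" "j0 < length c" "i0 \<noteq> j0" "edge_of G (c ! i0) = edge_of G (c ! j0)"
          unfolding distinct_conv_nth by auto
        then obtain i j where ij: "i < j" "j < length c" "edge_of G (c ! i) = edge_of G (c ! j)"
          by (metis linorder_neq_iff)
        have dn: "\<And>a b. a < length c \<Longrightarrow> b < length c \<Longrightarrow> src G (c ! a) = src G (c ! b) \<Longrightarrow> a = b"
        proof -
          fix a b assume ab: "a < length c" "b < length c" "src G (c ! a) = src G (c ! b)"
          then show "a = b" using nth_eq_iff_index_eq[OF dsrc, of a b] by simp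
        qed
        have "c ! j \<in> {c ! i, invol G (c ! i)}"
          using ij(3) unfolding edge_of_def by blast
        moreover have "c ! j \<noteq> c ! i" using dn[of i j] ij by auto
        ultimately have cj: "c ! j = invol G (c ! i)" by blast
        have ci: "c ! i \<in> dedges G" using setc ij by auto
        have invinv: "invol G (invol G (c ! i)) = c ! i"
          using ci g by (auto simp: dedges_def is_graph_def)
        have sj: "src G (c ! j) = tgt G (c ! i)" using cj by (simp add: src_def tgt_def)
        have ti: "tgt G (c ! i) = src G (c ! (i + 1))" using walk_nth[OF w, of i] ij by simp
        have j1: "j = i + 1" using dn[of j "i + 1"] sj ti ij by simp
        have tj: "tgt G (c ! j) = src G (c ! i)" using cj invinv by (simp add: src_def tgt_def)
        have nj: "\<not> j + 1 < length c"
        proof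
          assume a: "j + 1 < length c"
          then have "tgt G (c ! j) = src G (c ! (j + 1))" using walk_nth[OF w, of j] by simp
          then show False using dn[of i "j + 1"] a tj ij by simp
        qed
        then have "tgt G (c ! j) = u" using walk_nth[OF w, of j] ij by simp
        then have i0: "i = 0" using dn[of i 0] tj u0 ij ne by simp
        have len: "length c = 2" using nj j1 i0 ij by simp
        then obtain x y where xy: "c = [x, y]"
          by (auto simp: numeral_2_eq_2 length_Suc_conv)
        have "y = invol G x" using cj xy i0 j1 by simp
        moreover have "x \<in> dedges G" using setc xy by simp
        ultimately show ?thesis using anti xy by simp
      qed
    qed
  qed
qed


lemma walk_exists:
  assumes "connected_graph G" "u \<in> verts G" "v \<in> verts G"
  shows "\<exists>c. walk G u c v"
proof -
  have "(u, v) \<in> (adj G)\<^sup>*" using assms by (auto simp: connected_graph_def)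
  then show ?thesis
  proof (induction rule: rtrancl_induct)
    case base
    show ?case by (rule exI[of _ "[]"], rule walk.wnil)
  next
    case (step y z)
    then obtain c where c: "walk G u c y" by blast
    from step(2) obtain h where h: "h \<in> dedges G" "src G h = y" "tgt G h = z"
      by (auto simp: adj_def)
    have "walk G (tgt G h) [] z" using h(3) walk.wnil by simp
    then have "walk G y [h] z" using h by (intro walk.wcons) auto
    then show ?case using c walk_append[of G u c "[h]" z] by blast
  qed
qed

lemma sum_rev_inv:
  fixes f :: "'h \<Rightarrow> rat"
  assumes anti: "\<And>h. h \<in> dedges G \<Longrightarrow> f (invol G h) = - f h"
  shows "set c \<subseteq> dedges G \<Longrightarrow> sum_list (map f (rev (map (invol G) c))) = - sum_list (map f c)"
  by (induction c) (auto simp: anti)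

lemma path_indep:
  fixes f :: "'h \<Rightarrow> rat"
  assumes g: "is_graph G"
    and anti: "\<And>h. h \<in> dedges G \<Longrightarrow> f (invol G h) = - f h"
    and cyc: "\<And>c. is_cycle G c \<Longrightarrow> sum_list (map f c) = 0"
    and w1: "walk G r c1 v" and w2: "walk G r c2 v"
  shows "sum_list (map f c1) = sum_list (map f c2)"
proof -
  have "walk G v (rev (map (invol G) c2)) r" using walk_rev[OF g w2] .
  then have "walk G r (c1 @ rev (map (invol G) c2)) r"
    using w1 walk_append[of G r c1 "rev (map (invol G) c2)" r] by blast
  then have "sum_list (map f (c1 @ rev (map (invol G) c2))) = 0"
    using closed_walk_zero[OF g anti cyc] by blast
  moreover have "sum_list (map f (rev (map (invol G) c2))) = - sum_list (map f c2)"
    using sum_rev_inv[of G f, OF anti] walk_set[OF w2] by blast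
  ultimately show ?thesis by simp
qed

lemma flow_sum_zero:
  fixes f d :: "'h \<Rightarrow> rat"
  assumes g: "is_graph G" and conn: "connected_graph G"
    and anti: "\<And>h. h \<in> dedges G \<Longrightarrow> f (invol G h) = - f h"
    and cyc: "\<And>c. is_cycle G c \<Longrightarrow> sum_list (map f c) = 0"
    and antid: "\<And>h. h \<in> dedges G \<Longrightarrow> d (invol G h) = - d h"
    and legd: "\<And>h. h \<in> halfs G \<Longrightarrow> invol G h = h \<Longrightarrow> d h = 0"
    and vert: "\<And>v. v \<in> verts G \<Longrightarrow> (\<Sum>h\<in>{h \<in> halfs G. endp G h = v}. d h) = 0"
  shows "(\<Sum>h\<in>dedges G. d h * f h) = 0"
proof -
  obtain r where r: "r \<in> verts G" using conn by (auto simp: connected_graph_def)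
  define phi where "phi v = sum_list (map f (SOME c. walk G r c v))" for v
  have phi: "phi v = sum_list (map f c)" if "v \<in> verts G" "walk G r c v" for v c
  proof -
    have "\<exists>c. walk G r c v" using that by blast
    then have "walk G r (SOME c. walk G r c v) v" by (rule someI_ex)
    then show ?thesis unfolding phi_def using path_indep[OF g anti cyc _ that(2)] by blast
  qed
  have fin: "finite (halfs G)" using g by (simp add: is_graph_def)
  have Dsub: "dedges G \<subseteq> halfs G" by (auto simp: dedges_def)
  have finD: "finite (dedges G)" using fin Dsub finite_subset by blast
  have ginv: "invol G h \<in> dedges G \<and> invol G (invol G h) = h" if "h \<in> dedges G" for h
    using that g by (auto simp: dedges_def is_graph_def)
  have grad: "f h = phi (tgt G h) - phi (src G h)" if h: "h \<in> dedges G" for h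
  proof -
    have sv: "src G h \<in> verts G" using h g by (auto simp: src_def dedges_def is_graph_def)
    have tv: "tgt G h \<in> verts G" using h g ginv[OF h] by (auto simp: tgt_def dedges_def is_graph_def)
    obtain c where c: "walk G r c (src G h)" using walk_exists[OF conn r sv] by blast
    have "walk G (tgt G h) [] (tgt G h)" by (rule walk.wnil)
    then have "walk G (src G h) [h] (tgt G h)" using h by (intro walk.wcons) auto
    then have "walk G r (c @ [h]) (tgt G h)" using c walk_append[of G r c "[h]" "tgt G h"] by blast
    then have "phi (tgt G h) = sum_list (map f c) + f h" using phi[OF tv] by simp
    moreover have "phi (src G h) = sum_list (map f c)" using phi[OF sv c] .
    ultimately show ?thesis by simp
  qed
  have bij: "bij_betw (invol G) (dedges G) (dedges G)"
    by (rule bij_betw_byWitness[where f' = "invol G"]) (auto simp: ginv)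
  have S1: "(\<Sum>h\<in>dedges G. d h * phi (tgt G h)) = (\<Sum>h\<in>dedges G. - (d h * phi (src G h)))"
  proof -
    have "(\<Sum>h\<in>dedges G. d h * phi (tgt G h)) = (\<Sum>h\<in>dedges G. d (invol G h) * phi (tgt G (invol G h)))"
      using sum.reindex_bij_betw[OF bij, of "\<lambda>h. d h * phi (tgt G h)"] by simp
    also have "\<dots> = (\<Sum>h\<in>dedges G. - (d h * phi (src G h)))"
      by (rule sum.cong) (auto simp: antid ginv tgt_def src_def)
    finally show ?thesis .
  qed
  have S2: "(\<Sum>h\<in>dedges G. d h * phi (src G h)) = 0"
  proof -
    have "(\<Sum>h\<in>dedges G. d h * phi (src G h)) = (\<Sum>h\<in>halfs G. d h * phi (endp G h))"
      unfolding src_def by (rule sum.mono_neutral_left[OF fin Dsub]) (auto simp: dedges_def legd)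
    also have "\<dots> = (\<Sum>v\<in>verts G. \<Sum>h\<in>{h \<in> halfs G. endp G h = v}. d h * phi (endp G h))"
      by (rule sum.group[symmetric]) (use g in \<open>auto simp: is_graph_def\<close>)
    also have "\<dots> = (\<Sum>v\<in>verts G. phi v * (\<Sum>h\<in>{h \<in> halfs G. endp G h = v}. d h))"
      by (rule sum.cong) (auto simp: sum_distrib_left mult.commute intro: sum.cong)
    also have "\<dots> = 0" by (simp add: vert)
    finally show ?thesis .
  qed
  have "(\<Sum>h\<in>dedges G. d h * f h) = (\<Sum>h\<in>dedges G. d h * phi (tgt G h) - d h * phi (src G h))"
    by (rule sum.cong) (auto simp: grad right_diff_distrib)
  also have "\<dots> = (\<Sum>h\<in>dedges G. d h * phi (tgt G h)) - (\<Sum>h\<in>dedges G. d h * phi (src G h))"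
    by (simp add: sum_subtractf)
  also have "\<dots> = 0" using S1 S2 by (simp add: sum_negf)
  finally show ?thesis .
qed


lemma key:
  fixes G :: "('v, 'h) graph" and w1 w2 m :: "'h \<Rightarrow> int" and t :: "'h set \<Rightarrow> rat"
  assumes g: "is_graph G" and conn: "connected_graph G"
    and w1: "w1 \<in> weightings G m" and w2: "w2 \<in> weightings G m"
    and t: "t \<in> thicknesses G" and c1: "compatible G w1 t" and c2: "compatible G w2 t"
    and h: "h \<in> dedges G" and ne: "w1 h \<noteq> w2 h"
  shows "t (edge_of G h) = 0"
proof -
  define d :: "'h \<Rightarrow> rat" where "d h = of_int (w1 h - w2 h)" for h
  define f1 :: "'h \<Rightarrow> rat" where "f1 h = of_int (w1 h) * t (edge_of G h)" for h
  define f2 :: "'h \<Rightarrow> rat" where "f2 h = of_int (w2 h) * t (edge_of G h)" for h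
  have W1: "is_weighting G w1" "\<forall>h\<in>legs G. w1 h = m h" using w1 by (auto simp: weightings_def)
  have W2: "is_weighting G w2" "\<forall>h\<in>legs G. w2 h = m h" using w2 by (auto simp: weightings_def)
  have ginv: "invol G h \<in> dedges G \<and> invol G (invol G h) = h" if "h \<in> dedges G" for h
    using that g by (auto simp: dedges_def is_graph_def)
  have eo: "edge_of G (invol G h) = edge_of G h" if "h \<in> dedges G" for h
    using ginv[OF that] by (auto simp: edge_of_def)
  have aw1: "w1 (invol G h) = - w1 h" if "h \<in> dedges G" for h
    using W1(1) that by (auto simp: is_weighting_def)
  have aw2: "w2 (invol G h) = - w2 h" if "h \<in> dedges G" for h
    using W2(1) that by (auto simp: is_weighting_def)
  have anti1: "\<And>h. h \<in> dedges G \<Longrightarrow> f1 (invol G h) = - f1 h"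
    by (simp add: f1_def eo aw1)
  have anti2: "\<And>h. h \<in> dedges G \<Longrightarrow> f2 (invol G h) = - f2 h"
    by (simp add: f2_def eo aw2)
  have cyc1: "\<And>c. is_cycle G c \<Longrightarrow> sum_list (map f1 c) = 0"
    using c1 unfolding compatible_def f1_def by blast
  have cyc2: "\<And>c. is_cycle G c \<Longrightarrow> sum_list (map f2 c) = 0"
    using c2 unfolding compatible_def f2_def by blast
  have antid: "\<And>h. h \<in> dedges G \<Longrightarrow> d (invol G h) = - d h"
    by (simp add: d_def aw1 aw2)
  have legd: "\<And>h. h \<in> halfs G \<Longrightarrow> invol G h = h \<Longrightarrow> d h = 0"
    using W1(2) W2(2) by (auto simp: d_def legs_def)
  have vert: "(\<Sum>h\<in>{h \<in> halfs G. endp G h = v}. d h) = 0" if "v \<in> verts G" for v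
  proof -
    have e: "(\<Sum>h\<in>{h \<in> halfs G. endp G h = v}. w1 h) = (\<Sum>h\<in>{h \<in> halfs G. endp G h = v}. w2 h)"
      using W1(1) W2(1) that unfolding is_weighting_def by (metis add_right_cancel)
    have "(\<Sum>h\<in>{h \<in> halfs G. endp G h = v}. d h)
        = of_int (\<Sum>h\<in>{h \<in> halfs G. endp G h = v}. w1 h) - of_int (\<Sum>h\<in>{h \<in> halfs G. endp G h = v}. w2 h)"
      by (simp add: d_def of_int_sum sum_subtractf)
    then show ?thesis using e by simp
  qed
  have z1: "(\<Sum>h\<in>dedges G. d h * f1 h) = 0"
    by (rule flow_sum_zero[OF g conn anti1 cyc1 antid legd vert])
  have z2: "(\<Sum>h\<in>dedges G. d h * f2 h) = 0"
    by (rule flow_sum_zero[OF g conn anti2 cyc2 antid legd vert])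
  have z: "(\<Sum>h\<in>dedges G. d h * f1 h - d h * f2 h) = 0" using z1 z2 by (simp add: sum_subtractf)
  have "(\<Sum>h\<in>dedges G. d h * f1 h - d h * f2 h) = (\<Sum>h\<in>dedges G. (d h)\<^sup>2 * t (edge_of G h))"
  proof (rule sum.cong[OF refl])
    fix k
    have "d k * f1 k - d k * f2 k = d k * (f1 k - f2 k)" by (simp add: right_diff_distrib)
    also have "f1 k - f2 k = d k * t (edge_of G k)"
      by (simp add: d_def f1_def f2_def left_diff_distrib)
    finally show "d k * f1 k - d k * f2 k = (d k)\<^sup>2 * t (edge_of G k)"
      by (simp add: power2_eq_square)
  qed
  then have sq: "(\<Sum>h\<in>dedges G. (d h)\<^sup>2 * t (edge_of G h)) = 0" using z by simp
  have "dedges G \<subseteq> halfs G" by (auto simp: dedges_def)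
  then have fin: "finite (dedges G)" using g finite_subset by (auto simp: is_graph_def)
  have tnn: "t (edge_of G h) \<ge> 0" if "h \<in> dedges G" for h
    using t that by (auto simp: thicknesses_def edges_def)
  have "\<forall>h\<in>dedges G. (d h)\<^sup>2 * t (edge_of G h) = 0"
    using sum_nonneg_eq_0_iff[OF fin, of "\<lambda>h. (d h)\<^sup>2 * t (edge_of G h)"] sq tnn by simp
  then have "(d h)\<^sup>2 * t (edge_of G h) = 0" using h by blast
  moreover have "d h \<noteq> 0" using ne by (simp add: d_def)
  ultimately show ?thesis by simp
qed

lemma sl_comb:
  "(\<Sum>h\<leftarrow>c. of_int (w h) * ((1 - u) * x (ed h) + u * y (ed h)))
   = (1 - u) * (\<Sum>h\<leftarrow>c. of_int (w h) * x (ed h)) + u * (\<Sum>h\<leftarrow>c. of_int (w h) * y (ed h) :: rat)"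
  by (induction c) (simp_all add: algebra_simps)

lemma convex_cone: "convex_rat (cone_w G w)"
  unfolding convex_rat_def
proof (intro ballI allI impI)
  fix x y and u :: rat
  assume x: "x \<in> cone_w G w" and y: "y \<in> cone_w G w" and u: "0 \<le> u \<and> u \<le> 1"
  have th: "(\<lambda>e. (1 - u) * x e + u * y e) \<in> thicknesses G"
    using x y u by (auto simp: cone_w_def thicknesses_def)
  have "compatible G w (\<lambda>e. (1 - u) * x e + u * y e)"
    using x y unfolding cone_w_def compatible_def by (simp add: sl_comb)
  then show "(\<lambda>e. (1 - u) * x e + u * y e) \<in> cone_w G w" using th by (simp add: cone_w_def)
qed

theorem lemma3p6:
  fixes G :: "('v, 'h) graph" and m :: "'h \<Rightarrow> int" and w1 w2 :: "'h \<Rightarrow> int"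
  assumes "is_graph G"
    and "connected_graph G"
    and "is_leg_weighting G m"
    and "w1 \<in> weightings G m"
    and "w2 \<in> weightings G m"
  shows "(cone_w G w1 \<inter> cone_w G w2) face_of_rat (cone_w G w1)"
proof -
  define Z where "Z = {t \<in> cone_w G w1. \<forall>h\<in>dedges G. w1 h \<noteq> w2 h \<longrightarrow> t (edge_of G h) = 0}"
  have IZ: "cone_w G w1 \<inter> cone_w G w2 = Z"
  proof
    show "cone_w G w1 \<inter> cone_w G w2 \<subseteq> Z"
    proof
      fix t assume t: "t \<in> cone_w G w1 \<inter> cone_w G w2"
      then have tt: "t \<in> thicknesses G" "compatible G w1 t" "compatible G w2 t"
        by (auto simp: cone_w_def)
      have "\<forall>h\<in>dedges G. w1 h \<noteq> w2 h \<longrightarrow> t (edge_of G h) = 0"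
        using key[OF assms(1,2,4,5) tt] by blast
      then show "t \<in> Z" using t unfolding Z_def by blast
    qed
  next
    show "Z \<subseteq> cone_w G w1 \<inter> cone_w G w2"
    proof
      fix t assume t: "t \<in> Z"
      have "compatible G w2 t" unfolding compatible_def
      proof (intro allI impI)
        fix c assume c: "is_cycle G c"
        then have sc: "set c \<subseteq> dedges G" by (simp add: is_cycle_def)
        have "(\<Sum>h\<leftarrow>c. of_int (w2 h) * t (edge_of G h)) = (\<Sum>h\<leftarrow>c. of_int (w1 h) * t (edge_of G h))"
        proof (rule arg_cong[where f = sum_list], rule map_cong[OF refl])
          fix h assume "h \<in> set c"
          then have "h \<in> dedges G" using sc by blast
          then show "of_int (w2 h) * t (edge_of G h) = (of_int (w1 h) * t (edge_of G h) :: rat)"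
            using t unfolding Z_def by (cases "w1 h = w2 h") auto
        qed
        also have "\<dots> = 0" using t c unfolding Z_def cone_w_def compatible_def by blast
        finally show "(\<Sum>h\<leftarrow>c. of_int (w2 h) * t (edge_of G h)) = 0" .
      qed
      then show "t \<in> cone_w G w1 \<inter> cone_w G w2" using t unfolding Z_def cone_w_def by blast
    qed
  qed
  have conv: "convex_rat Z"
    unfolding convex_rat_def
  proof (intro ballI allI impI)
    fix x y and u :: rat
    assume x: "x \<in> Z" and y: "y \<in> Z" and u: "0 \<le> u \<and> u \<le> 1"
    have "(\<lambda>e. (1 - u) * x e + u * y e) \<in> cone_w G w1"
      using convex_cone[of G w1] x y u unfolding convex_rat_def Z_def by blast
    then show "(\<lambda>e. (1 - u) * x e + u * y e) \<in> Z" using x y unfolding Z_def by auto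
  qed
  have face: "a \<in> Z \<and> b \<in> Z"
    if a: "a \<in> cone_w G w1" and b: "b \<in> cone_w G w1" and x: "x \<in> Z" and xs: "x \<in> open_segment_rat a b"
    for a b x
  proof -
    obtain u :: rat where u: "0 < u" "u < 1" and xd: "x = (\<lambda>e. (1 - u) * a e + u * b e)"
      using xs unfolding open_segment_rat_def by (auto split: if_splits)
    have "a (edge_of G h) = 0 \<and> b (edge_of G h) = 0" if h: "h \<in> dedges G" "w1 h \<noteq> w2 h" for h
    proof -
      have e: "edge_of G h \<in> edges G" using h by (simp add: edges_def)
      have an: "a (edge_of G h) \<ge> 0" using a e by (auto simp: cone_w_def thicknesses_def)
      have bn: "b (edge_of G h) \<ge> 0" using b e by (auto simp: cone_w_def thicknesses_def)
      have "x (edge_of G h) = 0" using x h unfolding Z_def by blast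
      then have s0: "(1 - u) * a (edge_of G h) + u * b (edge_of G h) = 0" using xd by simp
      have p1: "(1 - u) * a (edge_of G h) \<ge> 0" using an u by simp
      have p2: "u * b (edge_of G h) \<ge> 0" using bn u by simp
      have "(1 - u) * a (edge_of G h) = 0" "u * b (edge_of G h) = 0" using s0 p1 p2 by linarith+
      then show ?thesis using u by simp
    qed
    then show ?thesis using a b unfolding Z_def by blast
  qed
  have sub: "Z \<subseteq> cone_w G w1" unfolding Z_def by blast
  show ?thesis unfolding IZ face_of_rat_def
    using sub conv face by blast
qed

end
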